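(* For every constant $A\in\mathbb{N}$ there is a family $(\mathcal{V}_n)_{n\in\mathbb{N}}$ of VASS, each with two $\mathbb{N}$-counters and some number of $\mathbb{Z}$-counters, such that the size of $\mathcal{V}_n$ is polynomial in $n$ and $\mathcal{V}_n$ computes the set $\{(A^{2^n},\,B,\,B\cdot A^{2^n}) : B\in\mathbb{N}\}\subseteq\mathbb{Z}^3$.
   Context: A VASS with $d$ $\mathbb{N}$-counters and $k$ $\mathbb{Z}$-counters consists of a finite set $Q$ of states and a finite set $T\subseteq Q\times\mathbb{Z}^{d+k}\times Q$ of transitions. A configuration is $p(\mathbf{u})$ with $p\in Q$, $\mathbf{u}\in\mathbb{N}^d\times\mathbb{Z}^k$. A transition $(p,\mathbf{v},q)$ can be fired from $p(\mathbf{u})$, leading to $q(\mathbf{u}+\mathbf{v})$, provided the first $d$ coordinates of $\mathbf{u}+\mathbf{v}$ are nonnegative. Size is measured with numbers in unary: $|Q|+\sum_{(p,\mathbf{v},q)\in T}\|\mathbf{v}\|_1$. For $\mathbf{u}\in\mathbb{Z}^m$, write $\mathbf{u}\oplus 0^{j}$ for $\mathbf{u}$ padded with $j$ zeros. Such a VASS computes a set $S\subseteq\mathbb{Z}^m$ if there are distinguished states $q_I,q_F$ such that $S$ equals the set of $\mathbf{v}$ for which there is a run from $q_I(0^{d+k})$ to $q_F(\mathbf{v}\oplus 0^{d+k-m})$ (the vector $\mathbf{v}$ may occupy both $\mathbb{N}$- and $\mathbb{Z}$-counters). *)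

theory Defs
  imports Main
begin

text \<open>A VASS with nd natural-number counters (the first nd coordinates) and nz integer
counters. States are natural numbers; a transition is (p, v, q) with v an integer vector
(list) of length nd + nz.\<close>

record vass =
  nd :: nat
  nz :: nat
  states :: "nat set"
  trans :: "(nat \<times> int list \<times> nat) set"

definition wf_vass :: "vass \<Rightarrow> bool" where
  "wf_vass V \<longleftrightarrow> finite (states V) \<and> finite (trans V) \<and>
     (\<forall>(p, v, q) \<in> trans V. p \<in> states V \<and> q \<in> states V \<and> length v = nd V + nz V)"

definition vass_step :: "vass \<Rightarrow> nat \<times> int list \<Rightarrow> nat \<times> int list \<Rightarrow> bool" where
  "vass_step V c c' \<longleftrightarrow>
     (\<exists>v. (fst c, v, fst c') \<in> trans V \<and> length (snd c) = length v \<and>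
          snd c' = map2 (+) (snd c) v \<and> (\<forall>i < nd V. snd c' ! i \<ge> 0))"

definition vass_reach :: "vass \<Rightarrow> nat \<times> int list \<Rightarrow> nat \<times> int list \<Rightarrow> bool" where
  "vass_reach V = (vass_step V)\<^sup>*\<^sup>*"

text \<open>Size with numbers in unary: number of states plus sum of 1-norms of transition vectors.\<close>
definition vass_size :: "vass \<Rightarrow> nat" where
  "vass_size V = card (states V) + (\<Sum>t \<in> trans V. sum_list (map (\<lambda>x. nat \<bar>x\<bar>) (fst (snd t))))"

definition vass_computes :: "vass \<Rightarrow> nat \<Rightarrow> int list set \<Rightarrow> bool" where
  "vass_computes V m S \<longleftrightarrow> m \<le> nd V + nz V \<and>
     (\<exists>qI \<in> states V. \<exists>qF \<in> states V.
        S = {v. length v = m \<and>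
                vass_reach V (qI, replicate (nd V + nz V) 0)
                             (qF, v @ replicate (nd V + nz V - m) 0)})"

end

theory Submission
  imports Defs
begin

definition ev :: "(nat \<times> int) list \<Rightarrow> nat \<Rightarrow> int" where
  "ev l i = sum_list (map (\<lambda>p. if fst p = i then snd p else 0) l)"

lemma ev_simps[simp]: "ev [] i = 0" "ev (p # l) i = (if fst p = i then snd p else 0) + ev l i"
  by (simp_all add: ev_def)

definition BZ :: "nat \<Rightarrow> nat" where "BZ k = 3 + 6*k"
definition WW :: "nat \<Rightarrow> nat" where "WW k = 4 + 6*k"
definition Y0 :: "nat \<Rightarrow> nat" where "Y0 k = 5 + 6*k"
definition Y1 :: "nat \<Rightarrow> nat" where "Y1 k = 6 + 6*k"
definition Y2 :: "nat \<Rightarrow> nat" where "Y2 k = 7 + 6*k"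
definition TT :: "nat \<Rightarrow> nat" where "TT k = 8 + 6*k"
definition dd :: "nat \<Rightarrow> nat" where "dd n = 9 + 6*n"
definition st :: "nat \<Rightarrow> nat \<Rightarrow> nat" where "st k j = 1 + 8*k + j"

lemmas idx = BZ_def WW_def Y0_def Y1_def Y2_def TT_def

definition fwd :: "nat \<Rightarrow> (nat \<times> int) list" where
  "fwd k = [(0,-1),(1,1),(WW k,-1),(TT k,1)]"

definition lvl :: "nat \<Rightarrow> (nat \<times> (nat \<times> int) list \<times> nat) list" where
  "lvl k = [(st k 0, [(BZ k, -1)], st k 1),
  (st k 1, fwd k @ [(Y0 k, 1)], st k 1),
  (st k 2, fwd k @ [(Y1 k, 1)], st k 2),
  (st k 3, fwd k @ [(Y2 k, 1)], st k 3),
  (st k 4, fwd k @ [(WW (Suc k), 1)], st k 4),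
  (st k 1, [], st k 5), (st k 2, [], st k 5), (st k 3, [], st k 5), (st k 4, [], st k 5),
  (st k 5, [(0,1),(1,-1),(TT k,-1)], st k 5),
  (st k 5, [], st k 6),
  (st k 6, [(BZ k,-1),(Y0 k,-1),(Y1 k,-1)], st k 2),
  (st k 6, [(BZ k,-1),(BZ (Suc k),1)], st k 3),
  (st k 6, [(BZ k,-1),(Y2 k,-1)], st k 4),
  (st k 6, [], st k 7),
  (st k 7, [(0,1),(Y1 k,-1)], st k 7),
  (st k 7, [], st (Suc k) 0)]"

definition TD :: "nat \<Rightarrow> nat \<Rightarrow> (nat \<times> (nat \<times> int) list \<times> nat) list" where
  "TD A n = [(0, [(BZ 0, 1), (WW 0, int A)], 0), (0, [(0, int A)], st 0 0),
            (st n 0, [(1,1),(BZ n,-1)], st n 0), (st n 0, [(2,1),(WW n,-1)], st n 0)]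
            @ concat (map lvl [0..<n])"

definition tr :: "nat \<Rightarrow> nat \<times> (nat \<times> int) list \<times> nat \<Rightarrow> nat \<times> int list \<times> nat" where
  "tr d t = (fst t, map (ev (fst (snd t))) [0..<d], snd (snd t))"

definition VV :: "nat \<Rightarrow> nat \<Rightarrow> vass" where
  "VV A n = \<lparr>nd = 2, nz = 7 + 6*n, states = {0..<8*n+2}, trans = tr (dd n) ` set (TD A n)\<rparr>"

lemma map2_map: "map2 (+) (map g xs) (map h xs) = map (\<lambda>i. g i + h i) xs"
  by (induction xs) auto

lemma all_less_2: "(\<forall>i<(2::nat). P i) \<longleftrightarrow> P 0 \<and> P 1"
  by (auto simp: less_Suc_eq numeral_2_eq_2)

lemma step_intro:
  assumes "(p,l,q) \<in> set (TD A n)" "0 \<le> g 0 + ev l 0" "0 \<le> g 1 + ev l 1"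
  shows "vass_step (VV A n) (p, map g [0..<dd n]) (q, map (\<lambda>i. g i + ev l i) [0..<dd n])"
  unfolding vass_step_def
proof (rule exI[of _ "map (ev l) [0..<dd n]"], intro conjI)
  show "(fst (p, map g [0..<dd n]), map (ev l) [0..<dd n], fst (q, map (\<lambda>i. g i + ev l i) [0..<dd n])) \<in> trans (VV A n)"
    using assms(1) by (force simp: VV_def tr_def image_iff)
  show "\<forall>i<nd (VV A n). 0 \<le> snd (q, map (\<lambda>i. g i + ev l i) [0..<dd n]) ! i"
    using assms(2,3) by (simp add: VV_def all_less_2 dd_def nth_map)
qed (simp_all add: map2_map)

lemma step_elim:
  assumes "vass_step (VV A n) (p,u) (q,u')"
  shows "\<exists>l. (p,l,q) \<in> set (TD A n) \<and> length u' = dd n \<and> length u = dd n \<and>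
     (\<forall>i<dd n. u'!i = u!i + ev l i) \<and> 0 \<le> u'!0 \<and> 0 \<le> u'!1"
proof -
  obtain v where v: "(p, v, q) \<in> trans (VV A n)" "length u = length v" "u' = map2 (+) u v"
     "\<forall>i < nd (VV A n). u' ! i \<ge> 0"
    using assms unfolding vass_step_def by auto
  obtain l where l: "(p,l,q) \<in> set (TD A n)" "v = map (ev l) [0..<dd n]"
    using v(1) by (auto simp: VV_def tr_def)
  show ?thesis
    using v l by (auto simp: VV_def all_less_2)
qed

definition aa :: "nat \<Rightarrow> nat \<Rightarrow> int" where "aa A k = int A ^ (2^k)"

definition agree :: "nat \<Rightarrow> (nat \<Rightarrow> int) \<Rightarrow> (nat \<Rightarrow> int) \<Rightarrow> bool" where
  "agree d g G \<longleftrightarrow> (\<forall>i<d. g i = G i)"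

definition Gi :: "nat \<Rightarrow> int \<Rightarrow> nat \<Rightarrow> int" where
  "Gi A b = (\<lambda>i. if i = BZ 0 then b else if i = WW 0 then b * int A else 0)"

definition Ge :: "nat \<Rightarrow> int \<Rightarrow> int \<Rightarrow> int \<Rightarrow> int \<Rightarrow> nat \<Rightarrow> int" where
  "Ge k a b p q = (\<lambda>i. if i = 0 then a else if i = 1 then p else if i = 2 then q
     else if i = BZ k then b - p else if i = WW k then b * a - q else 0)"

definition Gr :: "nat \<Rightarrow> int \<Rightarrow> int \<Rightarrow> int \<Rightarrow> int \<Rightarrow> int \<Rightarrow> int \<Rightarrow> int \<Rightarrow> int \<Rightarrow> int \<Rightarrow> int \<Rightarrow> int \<Rightarrow> nat \<Rightarrow> int" where
  "Gr k a b R1 R2 R3 F0 F1 F2 F3 t C = (\<lambda>i. if i = 0 then a - t + C else if i = 1 then t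
     else if i = BZ k then b - 1 - R1 - R2 - R3 else if i = WW k then b * a - (F0 + F1 + F2 + F3)
     else if i = Y0 k then F0 - R1 else if i = Y1 k then F1 - R1 - C else if i = Y2 k then F2 - R3
     else if i = TT k then t else if i = BZ (Suc k) then R2 else if i = WW (Suc k) then F3 else 0)"

definition LocE :: "nat \<Rightarrow> nat \<Rightarrow> nat \<Rightarrow> int \<Rightarrow> (nat \<Rightarrow> int) \<Rightarrow> bool" where
  "LocE d n k a g \<longleftrightarrow> (\<exists>b p q. 0 \<le> p \<and> 0 \<le> q \<and> (k < n \<longrightarrow> p = 0 \<and> q = 0) \<and> agree d g (Ge k a b p q))"

definition LocR :: "nat \<Rightarrow> nat \<Rightarrow> int \<Rightarrow> nat \<Rightarrow> (nat \<Rightarrow> int) \<Rightarrow> bool" where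
  "LocR d k a j g \<longleftrightarrow> (\<exists>b R1 R2 R3 F0 F1 F2 F3 t C. 0 \<le> t \<and> (j \<noteq> 7 \<longrightarrow> C = 0) \<and>
     F0 + (if j = 1 then a - t else 0) \<le> a \<and>
     F1 + (if j = 2 then a - t else 0) \<le> a * R1 \<and>
     F2 + (if j = 3 then a - t else 0) \<le> a * R2 \<and>
     F3 + (if j = 4 then a - t else 0) \<le> a * R3 \<and>
     agree d g (Gr k a b R1 R2 R3 F0 F1 F2 F3 t C))"

lemma LocR_I:
  assumes "agree d g (Gr k a b R1 R2 R3 F0 F1 F2 F3 t C)" "0 \<le> t" "j \<noteq> 7 \<longrightarrow> C = 0"
     "F0 + (if j = 1 then a - t else 0) \<le> a"
     "F1 + (if j = 2 then a - t else 0) \<le> a * R1"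
     "F2 + (if j = 3 then a - t else 0) \<le> a * R2"
     "F3 + (if j = 4 then a - t else 0) \<le> a * R3"
  shows "LocR d k a j g"
  unfolding LocR_def using assms by blast

lemma agree_step:
  assumes "agree d g G" "\<forall>i<d. g' i = g i + ev l i" "\<And>i. G i + ev l i = G' i"
  shows "agree d g' G'"
  using assms by (simp add: agree_def)

lemma agree_same:
  assumes "agree d g G" "\<forall>i<d. g' i = g i + ev [] i"
  shows "agree d g' G"
  using assms by (simp add: agree_def)

lemma fwd1:
  assumes "LocR d k a 1 g" "\<forall>i<d. g' i = g i + ev (fwd k @ [(Y0 k, 1)]) i"
  shows "LocR d k a 1 g'"
proof -
  obtain b R1 R2 R3 F0 F1 F2 F3 t C where H: "0 \<le> t" "C = 0"
     "F0 + (a - t) \<le> a" "F1 \<le> a * R1" "F2 \<le> a * R2" "F3 \<le> a * R3"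
     "agree d g (Gr k a b R1 R2 R3 F0 F1 F2 F3 t C)"
    using assms(1) unfolding LocR_def by auto
  have "agree d g' (Gr k a b R1 R2 R3 (F0+1) F1 F2 F3 (t+1) C)"
    by (rule agree_step[OF H(7) assms(2)]) (auto simp: Gr_def fwd_def idx)
  then show ?thesis by (rule LocR_I) (use H in auto)
qed

lemma fwd2:
  assumes "LocR d k a 2 g" "\<forall>i<d. g' i = g i + ev (fwd k @ [(Y1 k, 1)]) i"
  shows "LocR d k a 2 g'"
proof -
  obtain b R1 R2 R3 F0 F1 F2 F3 t C where H: "0 \<le> t" "C = 0"
     "F0 \<le> a" "F1 + (a - t) \<le> a * R1" "F2 \<le> a * R2" "F3 \<le> a * R3"
     "agree d g (Gr k a b R1 R2 R3 F0 F1 F2 F3 t C)"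
    using assms(1) unfolding LocR_def by auto
  have "agree d g' (Gr k a b R1 R2 R3 F0 (F1+1) F2 F3 (t+1) C)"
    by (rule agree_step[OF H(7) assms(2)]) (auto simp: Gr_def fwd_def idx)
  then show ?thesis by (rule LocR_I) (use H in auto)
qed

lemma fwd3:
  assumes "LocR d k a 3 g" "\<forall>i<d. g' i = g i + ev (fwd k @ [(Y2 k, 1)]) i"
  shows "LocR d k a 3 g'"
proof -
  obtain b R1 R2 R3 F0 F1 F2 F3 t C where H: "0 \<le> t" "C = 0"
     "F0 \<le> a" "F1 \<le> a * R1" "F2 + (a - t) \<le> a * R2" "F3 \<le> a * R3"
     "agree d g (Gr k a b R1 R2 R3 F0 F1 F2 F3 t C)"
    using assms(1) unfolding LocR_def by auto
  have "agree d g' (Gr k a b R1 R2 R3 F0 F1 (F2+1) F3 (t+1) C)"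
    by (rule agree_step[OF H(7) assms(2)]) (auto simp: Gr_def fwd_def idx)
  then show ?thesis by (rule LocR_I) (use H in auto)
qed

lemma fwd4:
  assumes "LocR d k a 4 g" "\<forall>i<d. g' i = g i + ev (fwd k @ [(WW (Suc k), 1)]) i"
  shows "LocR d k a 4 g'"
proof -
  obtain b R1 R2 R3 F0 F1 F2 F3 t C where H: "0 \<le> t" "C = 0"
     "F0 \<le> a" "F1 \<le> a * R1" "F2 \<le> a * R2" "F3 + (a - t) \<le> a * R3"
     "agree d g (Gr k a b R1 R2 R3 F0 F1 F2 F3 t C)"
    using assms(1) unfolding LocR_def by auto
  have "agree d g' (Gr k a b R1 R2 R3 F0 F1 F2 (F3+1) (t+1) C)"
    by (rule agree_step[OF H(7) assms(2)]) (auto simp: Gr_def fwd_def idx)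
  then show ?thesis by (rule LocR_I) (use H in auto)
qed

lemma toB:
  assumes "LocR d k a j g" "j \<in> {1,2,3,4}" "\<forall>i<d. g' i = g i + ev [] i" "0 \<le> g' 0" "0 < d"
  shows "LocR d k a 5 g'"
proof -
  obtain b R1 R2 R3 F0 F1 F2 F3 t C where H: "0 \<le> t" "j \<noteq> 7 \<longrightarrow> C = 0"
     "F0 + (if j = 1 then a - t else 0) \<le> a"
     "F1 + (if j = 2 then a - t else 0) \<le> a * R1"
     "F2 + (if j = 3 then a - t else 0) \<le> a * R2"
     "F3 + (if j = 4 then a - t else 0) \<le> a * R3"
     "agree d g (Gr k a b R1 R2 R3 F0 F1 F2 F3 t C)"
    using assms(1) unfolding LocR_def by blast
  have ag: "agree d g' (Gr k a b R1 R2 R3 F0 F1 F2 F3 t C)"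
    by (rule agree_same[OF H(7) assms(3)])
  have "g' 0 = a - t + C" using ag assms(5) by (simp add: agree_def Gr_def)
  then have nn: "0 \<le> a - t" using assms H(2) by auto
  show ?thesis using H assms(2) nn by (intro LocR_I[OF ag]) (auto split: if_splits)
qed

lemma bloop:
  assumes "LocR d k a 5 g" "\<forall>i<d. g' i = g i + ev [(0,1),(1,-1),(TT k,-1)] i" "0 \<le> g' 1" "1 < d"
  shows "LocR d k a 5 g'"
proof -
  obtain b R1 R2 R3 F0 F1 F2 F3 t C where H: "0 \<le> t" "C = 0"
     "F0 \<le> a" "F1 \<le> a * R1" "F2 \<le> a * R2" "F3 \<le> a * R3"
     "agree d g (Gr k a b R1 R2 R3 F0 F1 F2 F3 t C)"
    using assms(1) unfolding LocR_def by auto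
  have ag: "agree d g' (Gr k a b R1 R2 R3 F0 F1 F2 F3 (t - 1) C)"
    by (rule agree_step[OF H(7) assms(2)]) (auto simp: Gr_def idx)
  have "g' 1 = t - 1" using ag assms(4) by (simp add: agree_def Gr_def)
  then have "0 \<le> t - 1" using assms(3) by simp
  then show ?thesis using H by (intro LocR_I[OF ag]) auto
qed

lemma toH:
  assumes "LocR d k a 5 g" "\<forall>i<d. g' i = g i + ev [] i"
  shows "LocR d k a 6 g'"
proof -
  obtain b R1 R2 R3 F0 F1 F2 F3 t C where H: "0 \<le> t" "C = 0"
     "F0 \<le> a" "F1 \<le> a * R1" "F2 \<le> a * R2" "F3 \<le> a * R3"
     "agree d g (Gr k a b R1 R2 R3 F0 F1 F2 F3 t C)"
    using assms(1) unfolding LocR_def by auto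
  have ag: "agree d g' (Gr k a b R1 R2 R3 F0 F1 F2 F3 t C)"
    by (rule agree_same[OF H(7) assms(2)])
  then show ?thesis by (rule LocR_I) (use H in auto)
qed

lemma toC:
  assumes "LocR d k a 6 g" "\<forall>i<d. g' i = g i + ev [] i"
  shows "LocR d k a 7 g'"
proof -
  obtain b R1 R2 R3 F0 F1 F2 F3 t C where H: "0 \<le> t" "C = 0"
     "F0 \<le> a" "F1 \<le> a * R1" "F2 \<le> a * R2" "F3 \<le> a * R3"
     "agree d g (Gr k a b R1 R2 R3 F0 F1 F2 F3 t C)"
    using assms(1) unfolding LocR_def by auto
  have ag: "agree d g' (Gr k a b R1 R2 R3 F0 F1 F2 F3 t C)"
    by (rule agree_same[OF H(7) assms(2)])
  then show ?thesis by (rule LocR_I) (use H in auto)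
qed

lemma hf1:
  assumes "LocR d k a 6 g" "\<forall>i<d. g' i = g i + ev [(BZ k,-1),(Y0 k,-1),(Y1 k,-1)] i"
  shows "LocR d k a 2 g'"
proof -
  obtain b R1 R2 R3 F0 F1 F2 F3 t C where H: "0 \<le> t" "C = 0"
     "F0 \<le> a" "F1 \<le> a * R1" "F2 \<le> a * R2" "F3 \<le> a * R3"
     "agree d g (Gr k a b R1 R2 R3 F0 F1 F2 F3 t C)"
    using assms(1) unfolding LocR_def by auto
  have ag: "agree d g' (Gr k a b (R1+1) R2 R3 F0 F1 F2 F3 t C)"
    by (rule agree_step[OF H(7) assms(2)]) (auto simp: Gr_def idx)
  then show ?thesis by (rule LocR_I) (use H in \<open>auto simp: algebra_simps\<close>)
qed

lemma hf2:
  assumes "LocR d k a 6 g" "\<forall>i<d. g' i = g i + ev [(BZ k,-1),(BZ (Suc k),1)] i"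
  shows "LocR d k a 3 g'"
proof -
  obtain b R1 R2 R3 F0 F1 F2 F3 t C where H: "0 \<le> t" "C = 0"
     "F0 \<le> a" "F1 \<le> a * R1" "F2 \<le> a * R2" "F3 \<le> a * R3"
     "agree d g (Gr k a b R1 R2 R3 F0 F1 F2 F3 t C)"
    using assms(1) unfolding LocR_def by auto
  have ag: "agree d g' (Gr k a b R1 (R2+1) R3 F0 F1 F2 F3 t C)"
    by (rule agree_step[OF H(7) assms(2)]) (auto simp: Gr_def idx)
  then show ?thesis by (rule LocR_I) (use H in \<open>auto simp: algebra_simps\<close>)
qed

lemma hf3:
  assumes "LocR d k a 6 g" "\<forall>i<d. g' i = g i + ev [(BZ k,-1),(Y2 k,-1)] i"
  shows "LocR d k a 4 g'"
proof -
  obtain b R1 R2 R3 F0 F1 F2 F3 t C where H: "0 \<le> t" "C = 0"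
     "F0 \<le> a" "F1 \<le> a * R1" "F2 \<le> a * R2" "F3 \<le> a * R3"
     "agree d g (Gr k a b R1 R2 R3 F0 F1 F2 F3 t C)"
    using assms(1) unfolding LocR_def by auto
  have ag: "agree d g' (Gr k a b R1 R2 (R3+1) F0 F1 F2 F3 t C)"
    by (rule agree_step[OF H(7) assms(2)]) (auto simp: Gr_def idx)
  then show ?thesis by (rule LocR_I) (use H in \<open>auto simp: algebra_simps\<close>)
qed

lemma cloop:
  assumes "LocR d k a 7 g" "\<forall>i<d. g' i = g i + ev [(0,1),(Y1 k,-1)] i"
  shows "LocR d k a 7 g'"
proof -
  obtain b R1 R2 R3 F0 F1 F2 F3 t C where H: "0 \<le> t"
     "F0 \<le> a" "F1 \<le> a * R1" "F2 \<le> a * R2" "F3 \<le> a * R3"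
     "agree d g (Gr k a b R1 R2 R3 F0 F1 F2 F3 t C)"
    using assms(1) unfolding LocR_def by auto
  have ag: "agree d g' (Gr k a b R1 R2 R3 F0 F1 F2 F3 t (C+1))"
    by (rule agree_step[OF H(6) assms(2)]) (auto simp: Gr_def idx)
  then show ?thesis by (rule LocR_I) (use H in auto)
qed

lemma ef0:
  assumes "LocE d n k a g" "k < n" "\<forall>i<d. g' i = g i + ev [(BZ k,-1)] i"
  shows "LocR d k a 1 g'"
proof -
  obtain b where H: "agree d g (Ge k a b 0 0)"
    using assms(1,2) unfolding LocE_def by auto
  have ag: "agree d g' (Gr k a b 0 0 0 0 0 0 0 0 0)"
    by (rule agree_step[OF H assms(3)]) (auto simp: Gr_def Ge_def idx)
  then show ?thesis by (rule LocR_I) auto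
qed

lemma eloop1:
  assumes "LocE d n n a g" "\<forall>i<d. g' i = g i + ev [(1,1),(BZ n,-1)] i"
  shows "LocE d n n a g'"
proof -
  obtain b p q where H: "0 \<le> p" "0 \<le> q" "agree d g (Ge n a b p q)"
    using assms(1) unfolding LocE_def by auto
  have ag: "agree d g' (Ge n a b (p+1) q)"
    by (rule agree_step[OF H(3) assms(2)]) (auto simp: Ge_def idx)
  then show ?thesis unfolding LocE_def using H by (intro exI[of _ b] exI[of _ "p+1"] exI[of _ q]) auto
qed

lemma eloop2:
  assumes "LocE d n n a g" "\<forall>i<d. g' i = g i + ev [(2,1),(WW n,-1)] i"
  shows "LocE d n n a g'"
proof -
  obtain b p q where H: "0 \<le> p" "0 \<le> q" "agree d g (Ge n a b p q)"
    using assms(1) unfolding LocE_def by auto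
  have ag: "agree d g' (Ge n a b p (q+1))"
    by (rule agree_step[OF H(3) assms(2)]) (auto simp: Ge_def idx)
  then show ?thesis unfolding LocE_def using H by (intro exI[of _ b] exI[of _ p] exI[of _ "q+1"]) auto
qed

lemma iloop:
  assumes "agree d g (Gi A b)" "\<forall>i<d. g' i = g i + ev [(BZ 0, 1), (WW 0, int A)] i"
  shows "agree d g' (Gi A (b+1))"
  by (rule agree_step[OF assms]) (auto simp: Gi_def idx algebra_simps)

lemma ie0:
  assumes "agree d g (Gi A b)" "\<forall>i<d. g' i = g i + ev [(0, int A)] i"
  shows "LocE d n 0 (int A) g'"
proof -
  have "agree d g' (Ge 0 (int A) b 0 0)"
    by (rule agree_step[OF assms]) (auto simp: Gi_def Ge_def idx)
  then show ?thesis unfolding LocE_def by auto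
qed

lemma cexit:
  assumes "LocR d k a 7 g" "\<forall>i<d. g' i = g i + ev [] i" "TT k < d"
    "\<forall>i<d. BZ k \<le> i \<and> i \<le> TT k \<longrightarrow> g i = 0"
  shows "LocE d n (Suc k) (a*a) g'"
proof -
  obtain b R1 R2 R3 F0 F1 F2 F3 t C where H: "0 \<le> t"
     "F0 \<le> a" "F1 \<le> a * R1" "F2 \<le> a * R2" "F3 \<le> a * R3"
     "agree d g (Gr k a b R1 R2 R3 F0 F1 F2 F3 t C)"
    using assms(1) unfolding LocR_def by auto
  have z: "g (BZ k) = 0" "g (WW k) = 0" "g (Y0 k) = 0" "g (Y1 k) = 0" "g (Y2 k) = 0" "g (TT k) = 0"
    using assms(3,4) by (auto simp: idx)
  have v: "g (BZ k) = b - 1 - R1 - R2 - R3" "g (WW k) = b * a - (F0 + F1 + F2 + F3)"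
    "g (Y0 k) = F0 - R1" "g (Y1 k) = F1 - R1 - C" "g (Y2 k) = F2 - R3" "g (TT k) = t"
    using H(6) assms(3) by (auto simp: agree_def Gr_def idx)
  have e1: "b = 1 + R1 + R2 + R3" "t = 0" "F0 = R1" "F1 = R1 + C" "F2 = R3"
    using z v by auto
  have "b * a = a + a * R1 + a * R2 + a * R3" using e1(1) by (simp add: algebra_simps)
  then have s: "F0 + F1 + F2 + F3 = a + a * R1 + a * R2 + a * R3" using z v by auto
  have q: "F0 = a" "F1 = a * R1" "F2 = a * R2" "F3 = a * R3" using s H(2-5) by linarith+
  have r1: "R1 = a" "R3 = a * R2" using q e1 by auto
  have ag: "agree d g' (Gr k a b R1 R2 R3 F0 F1 F2 F3 t C)"
    by (rule agree_same[OF H(6) assms(2)])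
  have "agree d g' (Ge (Suc k) (a*a) R2 0 0)"
    using ag unfolding agree_def
  proof (intro allI impI)
    fix i assume "\<forall>i<d. g' i = Gr k a b R1 R2 R3 F0 F1 F2 F3 t C i" "i < d"
    then have "g' i = Gr k a b R1 R2 R3 F0 F1 F2 F3 t C i" by auto
    also have "\<dots> = Ge (Suc k) (a*a) R2 0 0 i"
      using e1 q r1 by (auto simp: Gr_def Ge_def idx algebra_simps)
    finally show "g' i = Ge (Suc k) (a*a) R2 0 0 i" .
  qed
  then show ?thesis unfolding LocE_def by auto
qed

definition lowz :: "nat \<Rightarrow> nat \<Rightarrow> (nat \<Rightarrow> int) \<Rightarrow> bool" where
  "lowz d k g \<longleftrightarrow> (\<forall>i<d. 3 \<le> i \<and> i < BZ k \<longrightarrow> g i = 0)"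

definition Loc :: "nat \<Rightarrow> nat \<Rightarrow> nat \<Rightarrow> nat \<Rightarrow> (nat \<Rightarrow> int) \<Rightarrow> bool" where
  "Loc A n k j g = (if j = 0 then LocE (dd n) n k (aa A k) g else LocR (dd n) k (aa A k) j g)"

definition PP :: "nat \<Rightarrow> nat \<Rightarrow> nat \<Rightarrow> (nat \<Rightarrow> int) \<Rightarrow> bool" where
  "PP A n q g \<longleftrightarrow> (q = 0 \<longrightarrow> (\<exists>b. agree (dd n) g (Gi A b))) \<and>
     (\<forall>k j. j < 8 \<longrightarrow> (k < n \<or> k = n \<and> j = 0) \<longrightarrow> q = st k j \<longrightarrow> lowz (dd n) k g \<longrightarrow> Loc A n k j g)"

lemma st_inj: "st k j = st k' j' \<Longrightarrow> j < 8 \<Longrightarrow> j' < 8 \<Longrightarrow> k = k' \<and> j = j'"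
  unfolding st_def by presburger

lemma st_nz: "st k j \<noteq> 0" by (simp add: st_def)

lemma PP_at: "PP A n (st k j) g \<Longrightarrow> j < 8 \<Longrightarrow> (k < n \<or> k = n \<and> j = 0) \<Longrightarrow> lowz (dd n) k g \<Longrightarrow> Loc A n k j g"
  unfolding PP_def by blast

lemma PP_intro_st:
  assumes "j < 8" "k < n \<or> k = n \<and> j = 0" "lowz (dd n) k g \<Longrightarrow> Loc A n k j g"
  shows "PP A n (st k j) g"
  unfolding PP_def using assms st_inj st_nz by metis

lemma PP_lift:
  assumes "k < n \<or> k = n \<and> j = 0 \<and> j' = 0" "j < 8" "j' < 8" "PP A n (st k j) g"
    "\<forall>i<dd n. g' i = g i + ev l i" "\<forall>i. 3 \<le> i \<and> i < BZ k \<longrightarrow> ev l i = 0"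
    "Loc A n k j g \<Longrightarrow> Loc A n k j' g'"
  shows "PP A n (st k j') g'"
proof (rule PP_intro_st)
  show "j' < 8" "k < n \<or> k = n \<and> j' = 0" using assms by auto
  assume "lowz (dd n) k g'"
  then have "lowz (dd n) k g" using assms(5,6) by (auto simp: lowz_def)
  then have "Loc A n k j g" using PP_at assms by blast
  then show "Loc A n k j' g'" using assms(7) by blast
qed

lemma dd_gt: "k < n \<Longrightarrow> TT k < dd n \<and> 0 < dd n \<and> 1 < dd n"
  by (auto simp: TT_def dd_def)


lemma T0:
  assumes "p = st k 0" "l = [(BZ k,-1)]" "q = st k 1" "k < n" "PP A n p g"
    "\<forall>i<dd n. g' i = g i + ev l i" "0 \<le> g' 0" "0 \<le> g' 1"
  shows "PP A n q g'"
proof -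
  have lz: "\<forall>i. 3 \<le> i \<and> i < BZ k \<longrightarrow> ev l i = 0" using assms(2) by (auto simp: fwd_def idx)
  have d: "TT k < dd n" "0 < dd n" "1 < dd n" using dd_gt[OF assms(4)] by auto
  note E = assms(6)[unfolded assms(2)]
  show ?thesis unfolding assms(3)
  proof (rule PP_lift[OF _ _ _ _ assms(6) lz, where j=0])
    assume "Loc A n k 0 g"
    then have L: "LocE (dd n) n k (aa A k) g" by (simp add: Loc_def)
    show "Loc A n k 1 g'" unfolding Loc_def using ef0[OF L assms(4) E] by auto
  qed (use assms in auto)
qed

lemma T1:
  assumes "p = st k 1" "l = fwd k @ [(Y0 k, 1)]" "q = st k 1" "k < n" "PP A n p g"
    "\<forall>i<dd n. g' i = g i + ev l i" "0 \<le> g' 0" "0 \<le> g' 1"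
  shows "PP A n q g'"
proof -
  have lz: "\<forall>i. 3 \<le> i \<and> i < BZ k \<longrightarrow> ev l i = 0" using assms(2) by (auto simp: fwd_def idx)
  have d: "TT k < dd n" "0 < dd n" "1 < dd n" using dd_gt[OF assms(4)] by auto
  note E = assms(6)[unfolded assms(2)]
  show ?thesis unfolding assms(3)
  proof (rule PP_lift[OF _ _ _ _ assms(6) lz, where j=1])
    assume "Loc A n k 1 g"
    then have L: "LocR (dd n) k (aa A k) 1 g" by (simp add: Loc_def)
    show "Loc A n k 1 g'" unfolding Loc_def using fwd1[OF L E] by auto
  qed (use assms in auto)
qed

lemma T2:
  assumes "p = st k 2" "l = fwd k @ [(Y1 k, 1)]" "q = st k 2" "k < n" "PP A n p g"
    "\<forall>i<dd n. g' i = g i + ev l i" "0 \<le> g' 0" "0 \<le> g' 1"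
  shows "PP A n q g'"
proof -
  have lz: "\<forall>i. 3 \<le> i \<and> i < BZ k \<longrightarrow> ev l i = 0" using assms(2) by (auto simp: fwd_def idx)
  have d: "TT k < dd n" "0 < dd n" "1 < dd n" using dd_gt[OF assms(4)] by auto
  note E = assms(6)[unfolded assms(2)]
  show ?thesis unfolding assms(3)
  proof (rule PP_lift[OF _ _ _ _ assms(6) lz, where j=2])
    assume "Loc A n k 2 g"
    then have L: "LocR (dd n) k (aa A k) 2 g" by (simp add: Loc_def)
    show "Loc A n k 2 g'" unfolding Loc_def using fwd2[OF L E] by auto
  qed (use assms in auto)
qed

lemma T3:
  assumes "p = st k 3" "l = fwd k @ [(Y2 k, 1)]" "q = st k 3" "k < n" "PP A n p g"
    "\<forall>i<dd n. g' i = g i + ev l i" "0 \<le> g' 0" "0 \<le> g' 1"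
  shows "PP A n q g'"
proof -
  have lz: "\<forall>i. 3 \<le> i \<and> i < BZ k \<longrightarrow> ev l i = 0" using assms(2) by (auto simp: fwd_def idx)
  have d: "TT k < dd n" "0 < dd n" "1 < dd n" using dd_gt[OF assms(4)] by auto
  note E = assms(6)[unfolded assms(2)]
  show ?thesis unfolding assms(3)
  proof (rule PP_lift[OF _ _ _ _ assms(6) lz, where j=3])
    assume "Loc A n k 3 g"
    then have L: "LocR (dd n) k (aa A k) 3 g" by (simp add: Loc_def)
    show "Loc A n k 3 g'" unfolding Loc_def using fwd3[OF L E] by auto
  qed (use assms in auto)
qed

lemma T4:
  assumes "p = st k 4" "l = fwd k @ [(WW (Suc k), 1)]" "q = st k 4" "k < n" "PP A n p g"
    "\<forall>i<dd n. g' i = g i + ev l i" "0 \<le> g' 0" "0 \<le> g' 1"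
  shows "PP A n q g'"
proof -
  have lz: "\<forall>i. 3 \<le> i \<and> i < BZ k \<longrightarrow> ev l i = 0" using assms(2) by (auto simp: fwd_def idx)
  have d: "TT k < dd n" "0 < dd n" "1 < dd n" using dd_gt[OF assms(4)] by auto
  note E = assms(6)[unfolded assms(2)]
  show ?thesis unfolding assms(3)
  proof (rule PP_lift[OF _ _ _ _ assms(6) lz, where j=4])
    assume "Loc A n k 4 g"
    then have L: "LocR (dd n) k (aa A k) 4 g" by (simp add: Loc_def)
    show "Loc A n k 4 g'" unfolding Loc_def using fwd4[OF L E] by auto
  qed (use assms in auto)
qed

lemma T5:
  assumes "p = st k 1" "l = []" "q = st k 5" "k < n" "PP A n p g"
    "\<forall>i<dd n. g' i = g i + ev l i" "0 \<le> g' 0" "0 \<le> g' 1"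
  shows "PP A n q g'"
proof -
  have lz: "\<forall>i. 3 \<le> i \<and> i < BZ k \<longrightarrow> ev l i = 0" using assms(2) by (auto simp: fwd_def idx)
  have d: "TT k < dd n" "0 < dd n" "1 < dd n" using dd_gt[OF assms(4)] by auto
  note E = assms(6)[unfolded assms(2)]
  show ?thesis unfolding assms(3)
  proof (rule PP_lift[OF _ _ _ _ assms(6) lz, where j=1])
    assume "Loc A n k 1 g"
    then have L: "LocR (dd n) k (aa A k) 1 g" by (simp add: Loc_def)
    show "Loc A n k 5 g'" unfolding Loc_def using toB[OF L _ E] assms(7) d by auto
  qed (use assms in auto)
qed

lemma T6:
  assumes "p = st k 2" "l = []" "q = st k 5" "k < n" "PP A n p g"
    "\<forall>i<dd n. g' i = g i + ev l i" "0 \<le> g' 0" "0 \<le> g' 1"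
  shows "PP A n q g'"
proof -
  have lz: "\<forall>i. 3 \<le> i \<and> i < BZ k \<longrightarrow> ev l i = 0" using assms(2) by (auto simp: fwd_def idx)
  have d: "TT k < dd n" "0 < dd n" "1 < dd n" using dd_gt[OF assms(4)] by auto
  note E = assms(6)[unfolded assms(2)]
  show ?thesis unfolding assms(3)
  proof (rule PP_lift[OF _ _ _ _ assms(6) lz, where j=2])
    assume "Loc A n k 2 g"
    then have L: "LocR (dd n) k (aa A k) 2 g" by (simp add: Loc_def)
    show "Loc A n k 5 g'" unfolding Loc_def using toB[OF L _ E] assms(7) d by auto
  qed (use assms in auto)
qed

lemma T7:
  assumes "p = st k 3" "l = []" "q = st k 5" "k < n" "PP A n p g"
    "\<forall>i<dd n. g' i = g i + ev l i" "0 \<le> g' 0" "0 \<le> g' 1"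
  shows "PP A n q g'"
proof -
  have lz: "\<forall>i. 3 \<le> i \<and> i < BZ k \<longrightarrow> ev l i = 0" using assms(2) by (auto simp: fwd_def idx)
  have d: "TT k < dd n" "0 < dd n" "1 < dd n" using dd_gt[OF assms(4)] by auto
  note E = assms(6)[unfolded assms(2)]
  show ?thesis unfolding assms(3)
  proof (rule PP_lift[OF _ _ _ _ assms(6) lz, where j=3])
    assume "Loc A n k 3 g"
    then have L: "LocR (dd n) k (aa A k) 3 g" by (simp add: Loc_def)
    show "Loc A n k 5 g'" unfolding Loc_def using toB[OF L _ E] assms(7) d by auto
  qed (use assms in auto)
qed

lemma T8:
  assumes "p = st k 4" "l = []" "q = st k 5" "k < n" "PP A n p g"
    "\<forall>i<dd n. g' i = g i + ev l i" "0 \<le> g' 0" "0 \<le> g' 1"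
  shows "PP A n q g'"
proof -
  have lz: "\<forall>i. 3 \<le> i \<and> i < BZ k \<longrightarrow> ev l i = 0" using assms(2) by (auto simp: fwd_def idx)
  have d: "TT k < dd n" "0 < dd n" "1 < dd n" using dd_gt[OF assms(4)] by auto
  note E = assms(6)[unfolded assms(2)]
  show ?thesis unfolding assms(3)
  proof (rule PP_lift[OF _ _ _ _ assms(6) lz, where j=4])
    assume "Loc A n k 4 g"
    then have L: "LocR (dd n) k (aa A k) 4 g" by (simp add: Loc_def)
    show "Loc A n k 5 g'" unfolding Loc_def using toB[OF L _ E] assms(7) d by auto
  qed (use assms in auto)
qed

lemma T9:
  assumes "p = st k 5" "l = [(0,1),(1,-1),(TT k,-1)]" "q = st k 5" "k < n" "PP A n p g"
    "\<forall>i<dd n. g' i = g i + ev l i" "0 \<le> g' 0" "0 \<le> g' 1"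
  shows "PP A n q g'"
proof -
  have lz: "\<forall>i. 3 \<le> i \<and> i < BZ k \<longrightarrow> ev l i = 0" using assms(2) by (auto simp: fwd_def idx)
  have d: "TT k < dd n" "0 < dd n" "1 < dd n" using dd_gt[OF assms(4)] by auto
  note E = assms(6)[unfolded assms(2)]
  show ?thesis unfolding assms(3)
  proof (rule PP_lift[OF _ _ _ _ assms(6) lz, where j=5])
    assume "Loc A n k 5 g"
    then have L: "LocR (dd n) k (aa A k) 5 g" by (simp add: Loc_def)
    show "Loc A n k 5 g'" unfolding Loc_def using bloop[OF L E] assms(8) d by auto
  qed (use assms in auto)
qed

lemma T10:
  assumes "p = st k 5" "l = []" "q = st k 6" "k < n" "PP A n p g"
    "\<forall>i<dd n. g' i = g i + ev l i" "0 \<le> g' 0" "0 \<le> g' 1"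
  shows "PP A n q g'"
proof -
  have lz: "\<forall>i. 3 \<le> i \<and> i < BZ k \<longrightarrow> ev l i = 0" using assms(2) by (auto simp: fwd_def idx)
  have d: "TT k < dd n" "0 < dd n" "1 < dd n" using dd_gt[OF assms(4)] by auto
  note E = assms(6)[unfolded assms(2)]
  show ?thesis unfolding assms(3)
  proof (rule PP_lift[OF _ _ _ _ assms(6) lz, where j=5])
    assume "Loc A n k 5 g"
    then have L: "LocR (dd n) k (aa A k) 5 g" by (simp add: Loc_def)
    show "Loc A n k 6 g'" unfolding Loc_def using toH[OF L E] by auto
  qed (use assms in auto)
qed

lemma T11:
  assumes "p = st k 6" "l = [(BZ k,-1),(Y0 k,-1),(Y1 k,-1)]" "q = st k 2" "k < n" "PP A n p g"
    "\<forall>i<dd n. g' i = g i + ev l i" "0 \<le> g' 0" "0 \<le> g' 1"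
  shows "PP A n q g'"
proof -
  have lz: "\<forall>i. 3 \<le> i \<and> i < BZ k \<longrightarrow> ev l i = 0" using assms(2) by (auto simp: fwd_def idx)
  have d: "TT k < dd n" "0 < dd n" "1 < dd n" using dd_gt[OF assms(4)] by auto
  note E = assms(6)[unfolded assms(2)]
  show ?thesis unfolding assms(3)
  proof (rule PP_lift[OF _ _ _ _ assms(6) lz, where j=6])
    assume "Loc A n k 6 g"
    then have L: "LocR (dd n) k (aa A k) 6 g" by (simp add: Loc_def)
    show "Loc A n k 2 g'" unfolding Loc_def using hf1[OF L E] by auto
  qed (use assms in auto)
qed

lemma T12:
  assumes "p = st k 6" "l = [(BZ k,-1),(BZ (Suc k),1)]" "q = st k 3" "k < n" "PP A n p g"
    "\<forall>i<dd n. g' i = g i + ev l i" "0 \<le> g' 0" "0 \<le> g' 1"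
  shows "PP A n q g'"
proof -
  have lz: "\<forall>i. 3 \<le> i \<and> i < BZ k \<longrightarrow> ev l i = 0" using assms(2) by (auto simp: fwd_def idx)
  have d: "TT k < dd n" "0 < dd n" "1 < dd n" using dd_gt[OF assms(4)] by auto
  note E = assms(6)[unfolded assms(2)]
  show ?thesis unfolding assms(3)
  proof (rule PP_lift[OF _ _ _ _ assms(6) lz, where j=6])
    assume "Loc A n k 6 g"
    then have L: "LocR (dd n) k (aa A k) 6 g" by (simp add: Loc_def)
    show "Loc A n k 3 g'" unfolding Loc_def using hf2[OF L E] by auto
  qed (use assms in auto)
qed

lemma T13:
  assumes "p = st k 6" "l = [(BZ k,-1),(Y2 k,-1)]" "q = st k 4" "k < n" "PP A n p g"
    "\<forall>i<dd n. g' i = g i + ev l i" "0 \<le> g' 0" "0 \<le> g' 1"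
  shows "PP A n q g'"
proof -
  have lz: "\<forall>i. 3 \<le> i \<and> i < BZ k \<longrightarrow> ev l i = 0" using assms(2) by (auto simp: fwd_def idx)
  have d: "TT k < dd n" "0 < dd n" "1 < dd n" using dd_gt[OF assms(4)] by auto
  note E = assms(6)[unfolded assms(2)]
  show ?thesis unfolding assms(3)
  proof (rule PP_lift[OF _ _ _ _ assms(6) lz, where j=6])
    assume "Loc A n k 6 g"
    then have L: "LocR (dd n) k (aa A k) 6 g" by (simp add: Loc_def)
    show "Loc A n k 4 g'" unfolding Loc_def using hf3[OF L E] by auto
  qed (use assms in auto)
qed

lemma T14:
  assumes "p = st k 6" "l = []" "q = st k 7" "k < n" "PP A n p g"
    "\<forall>i<dd n. g' i = g i + ev l i" "0 \<le> g' 0" "0 \<le> g' 1"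
  shows "PP A n q g'"
proof -
  have lz: "\<forall>i. 3 \<le> i \<and> i < BZ k \<longrightarrow> ev l i = 0" using assms(2) by (auto simp: fwd_def idx)
  have d: "TT k < dd n" "0 < dd n" "1 < dd n" using dd_gt[OF assms(4)] by auto
  note E = assms(6)[unfolded assms(2)]
  show ?thesis unfolding assms(3)
  proof (rule PP_lift[OF _ _ _ _ assms(6) lz, where j=6])
    assume "Loc A n k 6 g"
    then have L: "LocR (dd n) k (aa A k) 6 g" by (simp add: Loc_def)
    show "Loc A n k 7 g'" unfolding Loc_def using toC[OF L E] by auto
  qed (use assms in auto)
qed

lemma T15:
  assumes "p = st k 7" "l = [(0,1),(Y1 k,-1)]" "q = st k 7" "k < n" "PP A n p g"
    "\<forall>i<dd n. g' i = g i + ev l i" "0 \<le> g' 0" "0 \<le> g' 1"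
  shows "PP A n q g'"
proof -
  have lz: "\<forall>i. 3 \<le> i \<and> i < BZ k \<longrightarrow> ev l i = 0" using assms(2) by (auto simp: fwd_def idx)
  have d: "TT k < dd n" "0 < dd n" "1 < dd n" using dd_gt[OF assms(4)] by auto
  note E = assms(6)[unfolded assms(2)]
  show ?thesis unfolding assms(3)
  proof (rule PP_lift[OF _ _ _ _ assms(6) lz, where j=7])
    assume "Loc A n k 7 g"
    then have L: "LocR (dd n) k (aa A k) 7 g" by (simp add: Loc_def)
    show "Loc A n k 7 g'" unfolding Loc_def using cloop[OF L E] by auto
  qed (use assms in auto)
qed

lemma T16:
  assumes "p = st k 7" "l = []" "q = st (Suc k) 0" "k < n" "PP A n p g"
    "\<forall>i<dd n. g' i = g i + ev l i"
  shows "PP A n q g'"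
  unfolding assms(3)
proof (rule PP_intro_st)
  show "0 < (8::nat)" by simp
  show "Suc k < n \<or> Suc k = n \<and> 0 = (0::nat)" using assms(4) by auto
  have P: "PP A n (st k 7) g" using assms by simp
  assume lw: "lowz (dd n) (Suc k) g'"
  have d: "TT k < dd n" using dd_gt[OF assms(4)] by auto
  have gg: "\<forall>i<dd n. g' i = g i" using assms(6) assms(2) by simp
  have "lowz (dd n) k g" using lw gg by (auto simp: lowz_def idx)
  then have L: "LocR (dd n) k (aa A k) 7 g" using PP_at[OF P] assms(4) by (auto simp: Loc_def)
  have z: "\<forall>i<dd n. BZ k \<le> i \<and> i \<le> TT k \<longrightarrow> g i = 0" using lw gg by (auto simp: lowz_def idx)
  have "aa A (Suc k) = aa A k * aa A k" by (simp add: aa_def power_mult[symmetric] mult.commute power2_eq_square[symmetric])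
  then show "Loc A n (Suc k) 0 g'" unfolding Loc_def using cexit[OF L _ d z] assms(6)[unfolded assms(2)] by simp
qed

lemma lvl_mem: "(p,l,q) \<in> set (lvl k) \<Longrightarrow>
  (p = st k 0 \<and> l = [(BZ k,-1)] \<and> q = st k 1)\<or>
  (p = st k 1 \<and> l = fwd k @ [(Y0 k, 1)] \<and> q = st k 1)\<or>
  (p = st k 2 \<and> l = fwd k @ [(Y1 k, 1)] \<and> q = st k 2)\<or>
  (p = st k 3 \<and> l = fwd k @ [(Y2 k, 1)] \<and> q = st k 3)\<or>
  (p = st k 4 \<and> l = fwd k @ [(WW (Suc k), 1)] \<and> q = st k 4)\<or>
  (p = st k 1 \<and> l = [] \<and> q = st k 5)\<or>
  (p = st k 2 \<and> l = [] \<and> q = st k 5)\<or>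
  (p = st k 3 \<and> l = [] \<and> q = st k 5)\<or>
  (p = st k 4 \<and> l = [] \<and> q = st k 5)\<or>
  (p = st k 5 \<and> l = [(0,1),(1,-1),(TT k,-1)] \<and> q = st k 5)\<or>
  (p = st k 5 \<and> l = [] \<and> q = st k 6)\<or>
  (p = st k 6 \<and> l = [(BZ k,-1),(Y0 k,-1),(Y1 k,-1)] \<and> q = st k 2)\<or>
  (p = st k 6 \<and> l = [(BZ k,-1),(BZ (Suc k),1)] \<and> q = st k 3)\<or>
  (p = st k 6 \<and> l = [(BZ k,-1),(Y2 k,-1)] \<and> q = st k 4)\<or>
  (p = st k 6 \<and> l = [] \<and> q = st k 7)\<or>
  (p = st k 7 \<and> l = [(0,1),(Y1 k,-1)] \<and> q = st k 7)\<or>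
  (p = st k 7 \<and> l = [] \<and> q = st (Suc k) 0)"
  by (simp add: lvl_def)

lemma level_step:
  assumes "k < n" "(p,l,q) \<in> set (lvl k)" "PP A n p g" "\<forall>i<dd n. g' i = g i + ev l i"
    "0 \<le> g' 0" "0 \<le> g' 1"
  shows "PP A n q g'"
  using lvl_mem[OF assms(2)]
  apply (elim disjE conjE)
  subgoal by (rule T0) (use assms in auto)
  subgoal by (rule T1) (use assms in auto)
  subgoal by (rule T2) (use assms in auto)
  subgoal by (rule T3) (use assms in auto)
  subgoal by (rule T4) (use assms in auto)
  subgoal by (rule T5) (use assms in auto)
  subgoal by (rule T6) (use assms in auto)
  subgoal by (rule T7) (use assms in auto)
  subgoal by (rule T8) (use assms in auto)
  subgoal by (rule T9) (use assms in auto)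
  subgoal by (rule T10) (use assms in auto)
  subgoal by (rule T11) (use assms in auto)
  subgoal by (rule T12) (use assms in auto)
  subgoal by (rule T13) (use assms in auto)
  subgoal by (rule T14) (use assms in auto)
  subgoal by (rule T15) (use assms in auto)
  subgoal by (rule T16) (use assms in auto)
  done

lemma PP_intro_0: "\<exists>b. agree (dd n) g (Gi A b) \<Longrightarrow> PP A n 0 g"
  unfolding PP_def using st_nz by metis

lemma PP_0: "PP A n 0 g \<Longrightarrow> \<exists>b. agree (dd n) g (Gi A b)"
  unfolding PP_def by blast

lemma aa0: "aa A 0 = int A" by (simp add: aa_def)

lemma PP_step:
  assumes "PP A n p g" "(p,l,q) \<in> set (TD A n)" "\<forall>i<dd n. g' i = g i + ev l i"
    "0 \<le> g' 0" "0 \<le> g' 1"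
  shows "PP A n q g'"
proof -
  consider "p = 0" "l = [(BZ 0, 1), (WW 0, int A)]" "q = 0"
    | "p = 0" "l = [(0, int A)]" "q = st 0 0"
    | "p = st n 0" "l = [(1,1),(BZ n,-1)]" "q = st n 0"
    | "p = st n 0" "l = [(2,1),(WW n,-1)]" "q = st n 0"
    | k where "k < n" "(p,l,q) \<in> set (lvl k)"
    using assms(2) unfolding TD_def by auto
  then show ?thesis
  proof cases
    case 1
    then show ?thesis using PP_0[of A n g] assms iloop by (metis PP_intro_0)
  next
    case 2
    obtain b where b: "agree (dd n) g (Gi A b)" using PP_0 assms(1) 2 by blast
    show ?thesis unfolding 2
      by (rule PP_intro_st) (use ie0[OF b] assms(3) 2 in \<open>auto simp: Loc_def aa0\<close>)
  next
    case 3
    have lz: "\<forall>i. 3 \<le> i \<and> i < BZ n \<longrightarrow> ev l i = 0" using 3 by (auto simp: idx)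
    show ?thesis unfolding 3
      by (rule PP_lift[OF _ _ _ _ assms(3) lz, where j=0]) (use assms 3 eloop1 in \<open>auto simp: Loc_def\<close>)
  next
    case 4
    have lz: "\<forall>i. 3 \<le> i \<and> i < BZ n \<longrightarrow> ev l i = 0" using 4 by (auto simp: idx)
    show ?thesis unfolding 4
      by (rule PP_lift[OF _ _ _ _ assms(3) lz, where j=0]) (use assms 4 eloop2 in \<open>auto simp: Loc_def\<close>)
  next
    case 5
    then show ?thesis using level_step assms by blast
  qed
qed

definition Inv :: "nat \<Rightarrow> nat \<Rightarrow> nat \<times> int list \<Rightarrow> bool" where
  "Inv A n c \<longleftrightarrow> length (snd c) = dd n \<and> PP A n (fst c) (\<lambda>i. snd c ! i)"

lemma reach_inv:
  assumes "vass_reach (VV A n) (0, replicate (dd n) 0) c"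
  shows "Inv A n c"
  using assms unfolding vass_reach_def
proof (induction rule: rtranclp_induct)
  case base
  have "agree (dd n) (\<lambda>i. replicate (dd n) 0 ! i) (Gi A 0)"
    by (auto simp: agree_def Gi_def)
  then show ?case unfolding Inv_def by (auto intro: PP_intro_0)
next
  case (step y z)
  obtain p u q u' where yz: "y = (p,u)" "z = (q,u')" by (cases y, cases z) auto
  obtain l where l: "(p,l,q) \<in> set (TD A n)" "length u' = dd n" "length u = dd n"
     "\<forall>i<dd n. u'!i = u!i + ev l i" "0 \<le> u'!0" "0 \<le> u'!1"
    using step_elim step(2) yz by blast
  have "PP A n q (\<lambda>i. u' ! i)"
    by (rule PP_step[of A n p "\<lambda>i. u ! i" l]) (use step(3) yz l in \<open>auto simp: Inv_def\<close>)
  then show ?case using yz l by (simp add: Inv_def)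
qed

lemma list3: "length v = 3 \<Longrightarrow> v = [v!0, v!1, v!2]"
  by (cases v rule: list.exhaust; cases "tl v" rule: list.exhaust; cases "tl (tl v)" rule: list.exhaust) auto

lemma sound:
  assumes "length v = 3"
    "vass_reach (VV A n) (0, replicate (dd n) 0) (st n 0, v @ replicate (dd n - 3) 0)"
  shows "\<exists>B. v = [int (A ^ (2 ^ n)), int B, int (B * A ^ (2 ^ n))]"
proof -
  let ?u = "v @ replicate (dd n - 3) 0"
  have I: "PP A n (st n 0) (\<lambda>i. ?u ! i)" using reach_inv[OF assms(2)] by (simp add: Inv_def)
  have lz: "lowz (dd n) n (\<lambda>i. ?u ! i)"
    using assms(1) by (auto simp: lowz_def nth_append)
  have "LocE (dd n) n n (aa A n) (\<lambda>i. ?u ! i)"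
    using PP_at[OF I _ _ lz] by (simp add: Loc_def)
  then obtain b p q where H: "0 \<le> p" "0 \<le> q" "agree (dd n) (\<lambda>i. ?u ! i) (Ge n (aa A n) b p q)"
    unfolding LocE_def by blast
  have dn: "0 < dd n" "1 < dd n" "2 < dd n" "BZ n < dd n" "WW n < dd n" by (auto simp: dd_def idx)
  have e: "?u ! 0 = aa A n" "?u ! 1 = p" "?u ! 2 = q" "?u ! BZ n = b - p" "?u ! WW n = b * aa A n - q"
    using H(3) dn unfolding agree_def by (auto simp: Ge_def idx)
  have z: "?u ! BZ n = 0" "?u ! WW n = 0" using assms(1) by (auto simp: nth_append idx dd_def)
  have v: "v!0 = aa A n" "v!1 = p" "v!2 = q" using e assms(1) by (auto simp: nth_append)
  have "q = p * aa A n" using e(4,5) z by auto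
  then have "v = [int (A ^ (2 ^ n)), int (nat p), int (nat p * A ^ (2 ^ n))]"
    using list3[OF assms(1)] v H(1) by (simp add: aa_def)
  then show ?thesis by blast
qed

abbreviation "RR A n \<equiv> vass_reach (VV A n)"

lemma reach_trans: "RR A n x y \<Longrightarrow> RR A n y z \<Longrightarrow> RR A n x z"
  unfolding vass_reach_def by auto

lemma step_to:
  assumes "(p,l,q) \<in> set (TD A n)" "\<And>i. G i + ev l i = G' i" "0 \<le> G' 0" "0 \<le> G' 1"
  shows "RR A n (p, map G [0..<dd n]) (q, map G' [0..<dd n])"
proof -
  have "G' = (\<lambda>i. G i + ev l i)" using assms(2) by auto
  then show ?thesis unfolding vass_reach_def using step_intro[OF assms(1), of G] assms(3,4) by auto
qed

lemma loop_to0: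
  assumes "(p,l,p) \<in> set (TD A n)" "0 \<le> G 0" "0 \<le> G 1"
    "0 \<le> G 0 + int m * ev l 0" "0 \<le> G 1 + int m * ev l 1"
  shows "RR A n (p, map G [0..<dd n]) (p, map (\<lambda>i. G i + int m * ev l i) [0..<dd n])"
  using assms(4,5)
proof (induction m)
  case 0
  then show ?case unfolding vass_reach_def by simp
next
  case (Suc m)
  have c: "0 \<le> G j + int m * ev l j" if "0 \<le> G j" "0 \<le> G j + int (Suc m) * ev l j" for j
  proof (cases "ev l j \<ge> 0")
    case True then show ?thesis using that by simp
  next
    case False
    have "int (Suc m) * ev l j = int m * ev l j + ev l j" by (simp add: algebra_simps)
    then show ?thesis using that False by linarith
  qed
  have IH: "RR A n (p, map G [0..<dd n]) (p, map (\<lambda>i. G i + int m * ev l i) [0..<dd n])"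
    using Suc c assms(2,3) by blast
  have "RR A n (p, map (\<lambda>i. G i + int m * ev l i) [0..<dd n]) (p, map (\<lambda>i. G i + int (Suc m) * ev l i) [0..<dd n])"
    by (rule step_to[OF assms(1)]) (use Suc in \<open>auto simp: algebra_simps\<close>)
  then show ?case using IH reach_trans by blast
qed

lemma loop_to:
  assumes "(p,l,p) \<in> set (TD A n)" "\<And>i. G i + int m * ev l i = G' i" "0 \<le> G 0" "0 \<le> G 1"
    "0 \<le> G' 0" "0 \<le> G' 1"
  shows "RR A n (p, map G [0..<dd n]) (p, map G' [0..<dd n])"
proof -
  have "G' = (\<lambda>i. G i + int m * ev l i)" using assms(2) by auto
  then show ?thesis using loop_to0[OF assms(1,3,4)] assms(5,6) by auto
qed

lemma lvl_TD: "k < n \<Longrightarrow> x \<in> set (lvl k) \<Longrightarrow> x \<in> set (TD A n)"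
  unfolding TD_def by auto

lemma in_lvl: "k < n \<Longrightarrow> (p,l,q) \<in> set (lvl k) \<Longrightarrow> (p,l,q) \<in> set (TD A n)"
  by (rule lvl_TD)

lemma round1:
  assumes "k < n" "0 \<le> a"
  shows "RR A n (st k 6, map (Gr k a b R1 R2 R3 F0 F1 F2 F3 0 0) [0..<dd n])
                (st k 6, map (Gr k a b (R1+1) R2 R3 F0 (F1+a) F2 F3 0 0) [0..<dd n])"
proof -
  have s1: "RR A n (st k 6, map (Gr k a b R1 R2 R3 F0 F1 F2 F3 0 0) [0..<dd n])
                (st k 2, map (Gr k a b (R1+1) R2 R3 F0 F1 F2 F3 0 0) [0..<dd n])"
    by (rule step_to[OF in_lvl[OF assms(1)], of _ "[(BZ k,-1),(Y0 k,-1),(Y1 k,-1)]"])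
       (use assms in \<open>auto simp: lvl_def Gr_def idx\<close>)
  have s2: "RR A n (st k 2, map (Gr k a b (R1+1) R2 R3 F0 F1 F2 F3 0 0) [0..<dd n])
                (st k 2, map (Gr k a b (R1+1) R2 R3 F0 (F1+a) F2 F3 a 0) [0..<dd n])"
    by (rule loop_to[OF in_lvl[OF assms(1)], of _ "fwd k @ [(Y1 k, 1)]" _ "nat a"])
       (use assms in \<open>auto simp: lvl_def Gr_def idx fwd_def\<close>)
  have s3: "RR A n (st k 2, map (Gr k a b (R1+1) R2 R3 F0 (F1+a) F2 F3 a 0) [0..<dd n])
                (st k 5, map (Gr k a b (R1+1) R2 R3 F0 (F1+a) F2 F3 a 0) [0..<dd n])"
    by (rule step_to[OF in_lvl[OF assms(1)], of _ "[]"])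
       (use assms in \<open>auto simp: lvl_def Gr_def idx\<close>)
  have s4: "RR A n (st k 5, map (Gr k a b (R1+1) R2 R3 F0 (F1+a) F2 F3 a 0) [0..<dd n])
                (st k 5, map (Gr k a b (R1+1) R2 R3 F0 (F1+a) F2 F3 0 0) [0..<dd n])"
    by (rule loop_to[OF in_lvl[OF assms(1)], of _ "[(0,1),(1,-1),(TT k,-1)]" _ "nat a"])
       (use assms in \<open>auto simp: lvl_def Gr_def idx\<close>)
  have s5: "RR A n (st k 5, map (Gr k a b (R1+1) R2 R3 F0 (F1+a) F2 F3 0 0) [0..<dd n])
                (st k 6, map (Gr k a b (R1+1) R2 R3 F0 (F1+a) F2 F3 0 0) [0..<dd n])"
    by (rule step_to[OF in_lvl[OF assms(1)], of _ "[]"])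
       (use assms in \<open>auto simp: lvl_def Gr_def idx\<close>)
  show ?thesis using s1 s2 s3 s4 s5 reach_trans by meson
qed

lemma round2:
  assumes "k < n" "0 \<le> a"
  shows "RR A n (st k 6, map (Gr k a b R1 R2 R3 F0 F1 F2 F3 0 0) [0..<dd n])
                (st k 6, map (Gr k a b R1 (R2+1) R3 F0 F1 (F2+a) F3 0 0) [0..<dd n])"
proof -
  have s1: "RR A n (st k 6, map (Gr k a b R1 R2 R3 F0 F1 F2 F3 0 0) [0..<dd n])
                (st k 3, map (Gr k a b R1 (R2+1) R3 F0 F1 F2 F3 0 0) [0..<dd n])"
    by (rule step_to[OF in_lvl[OF assms(1)], of _ "[(BZ k,-1),(BZ (Suc k),1)]"])
       (use assms in \<open>auto simp: lvl_def Gr_def idx\<close>)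
  have s2: "RR A n (st k 3, map (Gr k a b R1 (R2+1) R3 F0 F1 F2 F3 0 0) [0..<dd n])
                (st k 3, map (Gr k a b R1 (R2+1) R3 F0 F1 (F2+a) F3 a 0) [0..<dd n])"
    by (rule loop_to[OF in_lvl[OF assms(1)], of _ "fwd k @ [(Y2 k, 1)]" _ "nat a"])
       (use assms in \<open>auto simp: lvl_def Gr_def idx fwd_def\<close>)
  have s3: "RR A n (st k 3, map (Gr k a b R1 (R2+1) R3 F0 F1 (F2+a) F3 a 0) [0..<dd n])
                (st k 5, map (Gr k a b R1 (R2+1) R3 F0 F1 (F2+a) F3 a 0) [0..<dd n])"
    by (rule step_to[OF in_lvl[OF assms(1)], of _ "[]"])
       (use assms in \<open>auto simp: lvl_def Gr_def idx\<close>)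
  have s4: "RR A n (st k 5, map (Gr k a b R1 (R2+1) R3 F0 F1 (F2+a) F3 a 0) [0..<dd n])
                (st k 5, map (Gr k a b R1 (R2+1) R3 F0 F1 (F2+a) F3 0 0) [0..<dd n])"
    by (rule loop_to[OF in_lvl[OF assms(1)], of _ "[(0,1),(1,-1),(TT k,-1)]" _ "nat a"])
       (use assms in \<open>auto simp: lvl_def Gr_def idx\<close>)
  have s5: "RR A n (st k 5, map (Gr k a b R1 (R2+1) R3 F0 F1 (F2+a) F3 0 0) [0..<dd n])
                (st k 6, map (Gr k a b R1 (R2+1) R3 F0 F1 (F2+a) F3 0 0) [0..<dd n])"
    by (rule step_to[OF in_lvl[OF assms(1)], of _ "[]"])
       (use assms in \<open>auto simp: lvl_def Gr_def idx\<close>)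
  show ?thesis using s1 s2 s3 s4 s5 reach_trans by meson
qed

lemma round3:
  assumes "k < n" "0 \<le> a"
  shows "RR A n (st k 6, map (Gr k a b R1 R2 R3 F0 F1 F2 F3 0 0) [0..<dd n])
                (st k 6, map (Gr k a b R1 R2 (R3+1) F0 F1 F2 (F3+a) 0 0) [0..<dd n])"
proof -
  have s1: "RR A n (st k 6, map (Gr k a b R1 R2 R3 F0 F1 F2 F3 0 0) [0..<dd n])
                (st k 4, map (Gr k a b R1 R2 (R3+1) F0 F1 F2 F3 0 0) [0..<dd n])"
    by (rule step_to[OF in_lvl[OF assms(1)], of _ "[(BZ k,-1),(Y2 k,-1)]"])
       (use assms in \<open>auto simp: lvl_def Gr_def idx\<close>)
  have s2: "RR A n (st k 4, map (Gr k a b R1 R2 (R3+1) F0 F1 F2 F3 0 0) [0..<dd n])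
                (st k 4, map (Gr k a b R1 R2 (R3+1) F0 F1 F2 (F3+a) a 0) [0..<dd n])"
    by (rule loop_to[OF in_lvl[OF assms(1)], of _ "fwd k @ [(WW (Suc k), 1)]" _ "nat a"])
       (use assms in \<open>auto simp: lvl_def Gr_def idx fwd_def\<close>)
  have s3: "RR A n (st k 4, map (Gr k a b R1 R2 (R3+1) F0 F1 F2 (F3+a) a 0) [0..<dd n])
                (st k 5, map (Gr k a b R1 R2 (R3+1) F0 F1 F2 (F3+a) a 0) [0..<dd n])"
    by (rule step_to[OF in_lvl[OF assms(1)], of _ "[]"])
       (use assms in \<open>auto simp: lvl_def Gr_def idx\<close>)
  have s4: "RR A n (st k 5, map (Gr k a b R1 R2 (R3+1) F0 F1 F2 (F3+a) a 0) [0..<dd n])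
                (st k 5, map (Gr k a b R1 R2 (R3+1) F0 F1 F2 (F3+a) 0 0) [0..<dd n])"
    by (rule loop_to[OF in_lvl[OF assms(1)], of _ "[(0,1),(1,-1),(TT k,-1)]" _ "nat a"])
       (use assms in \<open>auto simp: lvl_def Gr_def idx\<close>)
  have s5: "RR A n (st k 5, map (Gr k a b R1 R2 (R3+1) F0 F1 F2 (F3+a) 0 0) [0..<dd n])
                (st k 6, map (Gr k a b R1 R2 (R3+1) F0 F1 F2 (F3+a) 0 0) [0..<dd n])"
    by (rule step_to[OF in_lvl[OF assms(1)], of _ "[]"])
       (use assms in \<open>auto simp: lvl_def Gr_def idx\<close>)
  show ?thesis using s1 s2 s3 s4 s5 reach_trans by meson
qed

lemma round0:
  assumes "k < n" "0 \<le> a"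
  shows "RR A n (st k 0, map (Ge k a b 0 0) [0..<dd n])
                (st k 6, map (Gr k a b 0 0 0 a 0 0 0 0 0) [0..<dd n])"
proof -
  have s1: "RR A n (st k 0, map (Ge k a b 0 0) [0..<dd n])
                (st k 1, map (Gr k a b 0 0 0 0 0 0 0 0 0) [0..<dd n])"
    by (rule step_to[OF in_lvl[OF assms(1)], of _ "[(BZ k,-1)]"])
       (use assms in \<open>auto simp: lvl_def Gr_def Ge_def idx\<close>)
  have s2: "RR A n (st k 1, map (Gr k a b 0 0 0 0 0 0 0 0 0) [0..<dd n])
                (st k 1, map (Gr k a b 0 0 0 a 0 0 0 a 0) [0..<dd n])"
    by (rule loop_to[OF in_lvl[OF assms(1)], of _ "fwd k @ [(Y0 k, 1)]" _ "nat a"])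
       (use assms in \<open>auto simp: lvl_def Gr_def idx fwd_def\<close>)
  have s3: "RR A n (st k 1, map (Gr k a b 0 0 0 a 0 0 0 a 0) [0..<dd n])
                (st k 5, map (Gr k a b 0 0 0 a 0 0 0 a 0) [0..<dd n])"
    by (rule step_to[OF in_lvl[OF assms(1)], of _ "[]"])
       (use assms in \<open>auto simp: lvl_def Gr_def idx\<close>)
  have s4: "RR A n (st k 5, map (Gr k a b 0 0 0 a 0 0 0 a 0) [0..<dd n])
                (st k 5, map (Gr k a b 0 0 0 a 0 0 0 0 0) [0..<dd n])"
    by (rule loop_to[OF in_lvl[OF assms(1)], of _ "[(0,1),(1,-1),(TT k,-1)]" _ "nat a"])
       (use assms in \<open>auto simp: lvl_def Gr_def idx\<close>)
  have s5: "RR A n (st k 5, map (Gr k a b 0 0 0 a 0 0 0 0 0) [0..<dd n])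
                (st k 6, map (Gr k a b 0 0 0 a 0 0 0 0 0) [0..<dd n])"
    by (rule step_to[OF in_lvl[OF assms(1)], of _ "[]"])
       (use assms in \<open>auto simp: lvl_def Gr_def idx\<close>)
  show ?thesis using s1 s2 s3 s4 s5 reach_trans by meson
qed

lemma rounds1:
  assumes "k < n" "0 \<le> a"
  shows "RR A n (st k 6, map (Gr k a b R1 R2 R3 F0 F1 F2 F3 0 0) [0..<dd n])
                (st k 6, map (Gr k a b (R1 + int m) R2 R3 F0 (F1 + int m * a) F2 F3 0 0) [0..<dd n])"
proof (induction m arbitrary: R1 F1)
  case 0 then show ?case unfolding vass_reach_def by simp
next
  case (Suc m)
  have "RR A n (st k 6, map (Gr k a b (R1+1) R2 R3 F0 (F1+a) F2 F3 0 0) [0..<dd n])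
               (st k 6, map (Gr k a b (R1 + 1 + int m) R2 R3 F0 (F1 + a + int m * a) F2 F3 0 0) [0..<dd n])"
    by (rule Suc)
  then show ?case using round1[OF assms(1,2), of A b R1 R2 R3 F0 F1 F2 F3] reach_trans
    by (simp add: algebra_simps)
qed

lemma rounds2:
  assumes "k < n" "0 \<le> a"
  shows "RR A n (st k 6, map (Gr k a b R1 R2 R3 F0 F1 F2 F3 0 0) [0..<dd n])
                (st k 6, map (Gr k a b R1 (R2 + int m) R3 F0 F1 (F2 + int m * a) F3 0 0) [0..<dd n])"
proof (induction m arbitrary: R2 F2)
  case 0 then show ?case unfolding vass_reach_def by simp
next
  case (Suc m)
  have "RR A n (st k 6, map (Gr k a b R1 (R2+1) R3 F0 F1 (F2+a) F3 0 0) [0..<dd n])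
               (st k 6, map (Gr k a b R1 (R2 + 1 + int m) R3 F0 F1 (F2 + a + int m * a) F3 0 0) [0..<dd n])"
    by (rule Suc)
  then show ?case using round2[OF assms(1,2), of A b R1 R2 R3 F0 F1 F2 F3] reach_trans
    by (simp add: algebra_simps)
qed

lemma rounds3:
  assumes "k < n" "0 \<le> a"
  shows "RR A n (st k 6, map (Gr k a b R1 R2 R3 F0 F1 F2 F3 0 0) [0..<dd n])
                (st k 6, map (Gr k a b R1 R2 (R3 + int m) F0 F1 F2 (F3 + int m * a) 0 0) [0..<dd n])"
proof (induction m arbitrary: R3 F3)
  case 0 then show ?case unfolding vass_reach_def by simp
next
  case (Suc m)
  have "RR A n (st k 6, map (Gr k a b R1 R2 (R3+1) F0 F1 F2 (F3+a) 0 0) [0..<dd n])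
               (st k 6, map (Gr k a b R1 R2 (R3 + 1 + int m) F0 F1 F2 (F3 + a + int m * a) 0 0) [0..<dd n])"
    by (rule Suc)
  then show ?case using round3[OF assms(1,2), of A b R1 R2 R3 F0 F1 F2 F3] reach_trans
    by (simp add: algebra_simps)
qed

lemma level_run:
  assumes "k < n" "0 \<le> a" "0 \<le> b'"
  shows "RR A n (st k 0, map (Ge k a (1 + a + b' + b' * a) 0 0) [0..<dd n])
                (st (Suc k) 0, map (Ge (Suc k) (a*a) b' 0 0) [0..<dd n])"
proof -
  let ?b = "1 + a + b' + b' * a"
  have r0: "RR A n (st k 0, map (Ge k a ?b 0 0) [0..<dd n]) (st k 6, map (Gr k a ?b 0 0 0 a 0 0 0 0 0) [0..<dd n])"
    by (rule round0[OF assms(1,2)])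
  have r1: "RR A n (st k 6, map (Gr k a ?b 0 0 0 a 0 0 0 0 0) [0..<dd n]) (st k 6, map (Gr k a ?b a 0 0 a (a*a) 0 0 0 0) [0..<dd n])"
    using rounds1[OF assms(1,2), of A "?b" 0 0 0 a 0 0 0 "nat a"] assms by simp
  have r2: "RR A n (st k 6, map (Gr k a ?b a 0 0 a (a*a) 0 0 0 0) [0..<dd n]) (st k 6, map (Gr k a ?b a b' 0 a (a*a) (b'*a) 0 0 0) [0..<dd n])"
    using rounds2[OF assms(1,2), of A "?b" a 0 0 a "a*a" 0 0 "nat b'"] assms by simp
  have r3: "RR A n (st k 6, map (Gr k a ?b a b' 0 a (a*a) (b'*a) 0 0 0) [0..<dd n]) (st k 6, map (Gr k a ?b a b' (b'*a) a (a*a) (b'*a) (b'*a*a) 0 0) [0..<dd n])"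
    using rounds3[OF assms(1,2), of A "?b" a b' 0 a "a*a" "b'*a" 0 "nat (b'*a)"] assms by simp
  have r4: "RR A n (st k 6, map (Gr k a ?b a b' (b'*a) a (a*a) (b'*a) (b'*a*a) 0 0) [0..<dd n]) (st k 7, map (Gr k a ?b a b' (b'*a) a (a*a) (b'*a) (b'*a*a) 0 0) [0..<dd n])"
    by (rule step_to[OF in_lvl[OF assms(1)], of _ "[]"])
       (use assms in \<open>auto simp: lvl_def Gr_def idx\<close>)
  have aa: "0 \<le> a * a - a"
  proof (cases "a = 0")
    case False then have "1 \<le> a" using assms(2) by simp
    then show ?thesis using mult_left_mono[OF \<open>1 \<le> a\<close> assms(2)] by simp
  qed simp
  have r5: "RR A n (st k 7, map (Gr k a ?b a b' (b'*a) a (a*a) (b'*a) (b'*a*a) 0 0) [0..<dd n]) (st k 7, map (Gr k a ?b a b' (b'*a) a (a*a) (b'*a) (b'*a*a) 0 (a*a - a)) [0..<dd n])"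
    by (rule loop_to[OF in_lvl[OF assms(1)], of _ "[(0,1),(Y1 k,-1)]" _ "nat (a*a - a)"])
       (use assms aa in \<open>auto simp: lvl_def Gr_def idx\<close>)
  have r6: "RR A n (st k 7, map (Gr k a ?b a b' (b'*a) a (a*a) (b'*a) (b'*a*a) 0 (a*a - a)) [0..<dd n]) (st (Suc k) 0, map (Ge (Suc k) (a*a) b' 0 0) [0..<dd n])"
    by (rule step_to[OF in_lvl[OF assms(1)], of _ "[]"])
       (use assms aa in \<open>auto simp: lvl_def Gr_def Ge_def idx algebra_simps\<close>)
  show ?thesis using r0 r1 r2 r3 r4 r5 r6 reach_trans by meson
qed

lemma aa_nonneg: "0 \<le> aa A k" by (simp add: aa_def)
lemma aa_Suc: "aa A (Suc k) = aa A k * aa A k"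
  by (simp add: aa_def power_mult[symmetric] mult.commute power2_eq_square[symmetric])

lemma TD_init: "(0, [(BZ 0, 1), (WW 0, int A)], 0) \<in> set (TD A n)"
  "(0, [(0, int A)], st 0 0) \<in> set (TD A n)"
  "(st n 0, [(1,1),(BZ n,-1)], st n 0) \<in> set (TD A n)"
  "(st n 0, [(2,1),(WW n,-1)], st n 0) \<in> set (TD A n)"
  by (auto simp: TD_def)

lemma to_level:
  assumes "k \<le> n" "0 \<le> b"
  shows "RR A n (0, replicate (dd n) 0) (st k 0, map (Ge k (aa A k) b 0 0) [0..<dd n])"
  using assms
proof (induction k arbitrary: b)
  case 0
  have r0: "replicate (dd n) 0 = map (Gi A 0) [0..<dd n]"
    by (rule nth_equalityI) (auto simp: Gi_def)
  have s1: "RR A n (0, map (Gi A 0) [0..<dd n]) (0, map (Gi A b) [0..<dd n])"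
    by (rule loop_to[OF TD_init(1), of _ "nat b"]) (use 0 in \<open>auto simp: Gi_def idx algebra_simps\<close>)
  have s2: "RR A n (0, map (Gi A b) [0..<dd n]) (st 0 0, map (Ge 0 (aa A 0) b 0 0) [0..<dd n])"
    by (rule step_to[OF TD_init(2)]) (auto simp: Gi_def Ge_def idx aa0)
  show ?case using s1 s2 r0 reach_trans by metis
next
  case (Suc k)
  let ?a = "aa A k"
  have kn: "k < n" using Suc by auto
  have "RR A n (0, replicate (dd n) 0) (st k 0, map (Ge k ?a (1 + ?a + b + b * ?a) 0 0) [0..<dd n])"
    using Suc aa_nonneg[of A k] by simp
  moreover have "RR A n (st k 0, map (Ge k ?a (1 + ?a + b + b * ?a) 0 0) [0..<dd n])
                (st (Suc k) 0, map (Ge (Suc k) (?a*?a) b 0 0) [0..<dd n])"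
    by (rule level_run[OF kn aa_nonneg Suc.prems(2)])
  ultimately show ?case using reach_trans aa_Suc by metis
qed

lemma complete:
  "RR A n (0, replicate (dd n) 0) (st n 0, [int (A ^ (2 ^ n)), int B, int (B * A ^ (2 ^ n))] @ replicate (dd n - 3) 0)"
proof -
  let ?a = "aa A n" and ?b = "int B"
  have s0: "RR A n (0, replicate (dd n) 0) (st n 0, map (Ge n ?a ?b 0 0) [0..<dd n])"
    by (rule to_level) auto
  have s1: "RR A n (st n 0, map (Ge n ?a ?b 0 0) [0..<dd n]) (st n 0, map (Ge n ?a ?b ?b 0) [0..<dd n])"
    by (rule loop_to[OF TD_init(3), of _ "B"]) (auto simp: Ge_def idx aa_nonneg)
  have s2: "RR A n (st n 0, map (Ge n ?a ?b ?b 0) [0..<dd n]) (st n 0, map (Ge n ?a ?b ?b (?b * ?a)) [0..<dd n])"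
    by (rule loop_to[OF TD_init(4), of _ "nat (?b * ?a)"]) (auto simp: Ge_def idx aa_nonneg)
  have e: "map (Ge n ?a ?b ?b (?b * ?a)) [0..<dd n] = [int (A ^ (2 ^ n)), int B, int (B * A ^ (2 ^ n))] @ replicate (dd n - 3) 0"
  proof (rule nth_equalityI)
    show "length (map (Ge n ?a ?b ?b (?b * ?a)) [0..<dd n]) = length ([int (A ^ (2 ^ n)), int B, int (B * A ^ (2 ^ n))] @ replicate (dd n - 3) 0)"
      by (simp add: dd_def)
    fix i assume "i < length (map (Ge n ?a ?b ?b (?b * ?a)) [0..<dd n])"
    then have i: "i < dd n" by simp
    show "map (Ge n ?a ?b ?b (?b * ?a)) [0..<dd n] ! i = ([int (A ^ (2 ^ n)), int B, int (B * A ^ (2 ^ n))] @ replicate (dd n - 3) 0) ! i"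
      using i by (cases "i < 3") (auto simp: Ge_def nth_append aa_def idx dd_def nth_Cons' mult.commute)
  qed
  show ?thesis using s0 s1 s2 e reach_trans by metis
qed

definition nrm :: "(nat \<times> int) list \<Rightarrow> nat" where
  "nrm l = sum_list (map (\<lambda>p. nat \<bar>snd p\<bar>) l)"

lemma sum_upt_map: "sum_list (map f (map g [0..<d])) = (\<Sum>i\<in>{0..<d}. f (g i))"
  by (simp only: map_map comp_def sum_list_distinct_conv_sum_set[OF distinct_upt] set_upt)

lemma norm_ev: "sum_list (map (\<lambda>x. nat \<bar>x\<bar>) (map (ev l) [0..<d])) \<le> nrm l"
proof (induction l)
  case Nil then show ?case by (simp add: sum_upt_map nrm_def)
next
  case (Cons p l)
  have "(\<Sum>i\<in>{0..<d}. nat \<bar>ev (p # l) i\<bar>) \<le> (\<Sum>i\<in>{0..<d}. nat \<bar>if fst p = i then snd p else 0\<bar> + nat \<bar>ev l i\<bar>)"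
    by (rule sum_mono) auto
  also have "\<dots> = (\<Sum>i\<in>{0..<d}. nat \<bar>if fst p = i then snd p else 0\<bar>) + (\<Sum>i\<in>{0..<d}. nat \<bar>ev l i\<bar>)"
    by (rule sum.distrib)
  also have "(\<Sum>i\<in>{0..<d}. nat \<bar>if fst p = i then snd p else 0\<bar>) = (\<Sum>i\<in>{0..<d}. if fst p = i then nat \<bar>snd p\<bar> else 0)"
    by (rule sum.cong) auto
  also have "\<dots> \<le> nat \<bar>snd p\<bar>" by (simp add: sum.delta)
  finally have X: "(\<Sum>i\<in>{0..<d}. nat \<bar>ev (p # l) i\<bar>) \<le> nat \<bar>snd p\<bar> + (\<Sum>i\<in>{0..<d}. nat \<bar>ev l i\<bar>)"
    by simp
  have IH: "(\<Sum>i\<in>{0..<d}. nat \<bar>ev l i\<bar>) \<le> nrm l" using Cons.IH by (simp only: sum_upt_map)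
  have "nrm (p # l) = nat \<bar>snd p\<bar> + nrm l" by (simp add: nrm_def)
  then show ?case using X IH by (simp only: sum_upt_map)
qed

lemma sum_set_le_list: "sum (f :: _ \<Rightarrow> nat) (set xs) \<le> sum_list (map f xs)"
proof (induction xs)
  case (Cons x xs)
  have "sum f (set (x # xs)) \<le> f x + sum f (set xs)"
    by (cases "x \<in> set xs") (auto simp: insert_absorb)
  then show ?case using Cons by simp
qed simp

lemma sum_list_map_concat: "sum_list (map f (concat xss)) = sum_list (map (\<lambda>xs. sum_list (map f xs)) xss)"
  by (induction xss) auto

lemma lvl_nrm: "sum_list (map (\<lambda>t. nrm (fst (snd t))) (lvl k)) = 33"
  by (simp add: lvl_def fwd_def nrm_def)

lemma size_bound: "vass_size (VV A n) \<le> (2 * A + 48) * (n + 1)"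
proof -
  let ?f = "\<lambda>t. sum_list (map (\<lambda>x. nat \<bar>x\<bar>) (fst (snd t)))"
  have "(\<Sum>t\<in>trans (VV A n). ?f t) = (\<Sum>t\<in>tr (dd n) ` set (TD A n). ?f t)" by (simp add: VV_def)
  also have "\<dots> \<le> (\<Sum>x\<in>set (TD A n). ?f (tr (dd n) x))"
    using sum_image_le[of "set (TD A n)" ?f "tr (dd n)"] by (simp add: comp_def)
  also have "\<dots> \<le> (\<Sum>x\<in>set (TD A n). nrm (fst (snd x)))"
    by (rule sum_mono) (simp only: tr_def fst_conv snd_conv norm_ev)
  also have "\<dots> \<le> sum_list (map (\<lambda>x. nrm (fst (snd x))) (TD A n))"
    by (rule sum_set_le_list)
  also have "\<dots> = 2 * A + 5 + 33 * n"
    by (simp add: TD_def sum_list_map_concat comp_def lvl_nrm sum_list_triv) (simp add: nrm_def)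
  finally have "(\<Sum>t\<in>trans (VV A n). ?f t) \<le> 2 * A + 5 + 33 * n" .
  moreover have "card (states (VV A n)) = 8 * n + 2" by (simp add: VV_def)
  ultimately show ?thesis unfolding vass_size_def by (simp add: algebra_simps)
qed

lemma TD_states: "(p,l,q) \<in> set (TD A n) \<Longrightarrow> p < 8*n+2 \<and> q < 8*n+2"
  by (auto simp: TD_def lvl_def st_def)

lemma wf: "wf_vass (VV A n)"
  unfolding wf_vass_def by (auto simp: VV_def tr_def dd_def dest: TD_states)

theorem lemma12:
  fixes A :: nat
  shows "\<exists>V :: nat \<Rightarrow> vass. \<exists>c e :: nat.
           (\<forall>n. wf_vass (V n) \<and> nd (V n) = 2 \<and>
                vass_size (V n) \<le> c * (n + 1) ^ e \<and>
                vass_computes (V n) 3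
                  {[int (A ^ (2 ^ n)), int B, int (B * A ^ (2 ^ n))] | B. True})"
proof (intro exI allI conjI)
  fix n
  show "wf_vass (VV A n)" by (rule wf)
  show "nd (VV A n) = 2" by (simp add: VV_def)
  show "vass_size (VV A n) \<le> (2 * A + 48) * (n + 1) ^ 1" using size_bound by simp
  have d: "nd (VV A n) + nz (VV A n) = dd n" by (simp add: VV_def dd_def)
  have S: "{[int (A ^ (2 ^ n)), int B, int (B * A ^ (2 ^ n))] | B. True} =
      {v. length v = 3 \<and> vass_reach (VV A n) (0, replicate (dd n) 0) (st n 0, v @ replicate (dd n - 3) 0)}"
  proof (rule set_eqI, rule iffI)
    fix v assume "v \<in> {[int (A ^ (2 ^ n)), int B, int (B * A ^ (2 ^ n))] | B. True}"
    then obtain B where "v = [int (A ^ (2 ^ n)), int B, int (B * A ^ (2 ^ n))]" by blast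
    then show "v \<in> {v. length v = 3 \<and> vass_reach (VV A n) (0, replicate (dd n) 0) (st n 0, v @ replicate (dd n - 3) 0)}"
      using complete[of A n B] by simp
  next
    fix v assume "v \<in> {v. length v = 3 \<and> vass_reach (VV A n) (0, replicate (dd n) 0) (st n 0, v @ replicate (dd n - 3) 0)}"
    then show "v \<in> {[int (A ^ (2 ^ n)), int B, int (B * A ^ (2 ^ n))] | B. True}"
      using sound[of v A n] by auto
  qed
  have st: "0 \<in> states (VV A n)" "st n 0 \<in> states (VV A n)" by (auto simp: VV_def st_def)
  show "vass_computes (VV A n) 3 {[int (A ^ (2 ^ n)), int B, int (B * A ^ (2 ^ n))] | B. True}"
    unfolding vass_computes_def d using S st by (auto simp: dd_def)
qed

end
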